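(* Let $G$ be a graph, $h\geq 3$ a constant, $\Lambda>0$, and let $Y>0$ be any value (possibly depending on $n,h,\Lambda$). Fix a vertex $v$ with $t_G(v)\leq \Lambda/Y$ and a vector $P\in\mathsf{Product}_h(\Lambda)$. Then $v[P]\leq \frac{q}{Y}$, where $q=\frac{h!}{h^h}$.
   Context: An $h$-cycle is a cycle on $h$ distinct vertices; $t_G(v)$ is the number of $h$-cycles of $G$ containing $v$. Logarithms are base 2. $\mathsf{Product}_h(\Lambda)$ is the set of vectors $(p_1,\dots,p_h)\in[0,1]^h$ such that each $p_i\in\{2^{-j}: j \text{ an integer}, 0\leq j\leq \log(\Lambda)+1\}$ and $\prod_{i=1}^h p_i\leq 1/\Lambda$. For $P=(p_1,\dots,p_h)$, the $P$-discovery experiment is: sample a uniformly random coloring $\varphi:V(G)\to[h]$, keep each vertex of color class $i$ independently with probability $p_i$, and let $F$ be the induced subgraph on kept vertices; $v$ is $P$-discovered if $v$ lies on an $h$-cycle of $F$ whose vertices receive $h$ distinct colors. $v[P]$ is the probability that $v$ is $P$-discovered. *)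

theory Defs
  imports Complex_Main "HOL-Library.FuncSet"
begin

definition simple_graph :: "'a set \<Rightarrow> ('a \<Rightarrow> 'a \<Rightarrow> bool) \<Rightarrow> bool" where
  "simple_graph V E \<longleftrightarrow> finite V \<and> (\<forall>x y. E x y \<longrightarrow> x \<in> V \<and> y \<in> V)
     \<and> (\<forall>x y. E x y \<longrightarrow> E y x) \<and> (\<forall>x. \<not> E x x)"

text \<open>The h-cycles of the subgraph induced on V (vertex set V, adjacency E restricted to V),
  each cycle represented by its set of edges (edges = 2-element vertex sets).\<close>
definition hcycles :: "'a set \<Rightarrow> ('a \<Rightarrow> 'a \<Rightarrow> bool) \<Rightarrow> nat \<Rightarrow> 'a set set set" where
  "hcycles V E h = {C. \<exists>xs. length xs = h \<and> distinct xs \<and> set xs \<subseteq> V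
      \<and> (\<forall>i<h. E (xs ! i) (xs ! ((i + 1) mod h)))
      \<and> C = {{xs ! i, xs ! ((i + 1) mod h)} | i. i < h}}"

definition tG :: "'a set \<Rightarrow> ('a \<Rightarrow> 'a \<Rightarrow> bool) \<Rightarrow> nat \<Rightarrow> 'a \<Rightarrow> nat" where
  "tG V E h v = card {C \<in> hcycles V E h. v \<in> \<Union>C}"

definition Product :: "nat \<Rightarrow> real \<Rightarrow> (nat \<Rightarrow> real) set" where
  "Product h \<Lambda> = {p. (\<forall>i\<in>{1..h}. \<exists>j::int. 0 \<le> j \<and> real_of_int j \<le> log 2 \<Lambda> + 1
        \<and> p i = 2 powr (- real_of_int j))
      \<and> (\<Prod>i=1..h. p i) \<le> 1 / \<Lambda>}"

text \<open>v is discovered given coloring phi and the set S of kept vertices: v lies on an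
  h-cycle of the induced subgraph F = G[S] whose vertices get distinct colours.\<close>
definition discovered :: "('a \<Rightarrow> 'a \<Rightarrow> bool) \<Rightarrow> nat \<Rightarrow> ('a \<Rightarrow> nat) \<Rightarrow> 'a set \<Rightarrow> 'a \<Rightarrow> bool" where
  "discovered E h \<phi> S v \<longleftrightarrow> (\<exists>C\<in>hcycles S E h. v \<in> \<Union>C \<and> inj_on \<phi> (\<Union>C))"

text \<open>v[P]: probability of P-discovery. Colouring uniform over V \<rightarrow> {1..h};
  given the colouring, each vertex u is kept independently with probability p (phi u).\<close>
definition discovery_prob :: "'a set \<Rightarrow> ('a \<Rightarrow> 'a \<Rightarrow> bool) \<Rightarrow> nat \<Rightarrow> (nat \<Rightarrow> real) \<Rightarrow> 'a \<Rightarrow> real" where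
  "discovery_prob V E h p v =
     (\<Sum>\<phi>\<in>PiE V (\<lambda>_. {1..h}). \<Sum>S\<in>Pow V.
        (1 / real h ^ card V) * (\<Prod>u\<in>S. p (\<phi> u)) * (\<Prod>u\<in>V - S. 1 - p (\<phi> u))
        * (if discovered E h \<phi> S v then 1 else 0))"

end

theory Submission
  imports Defs
begin

lemma cycle_verts:
  assumes "C \<in> hcycles S E h" "h \<ge> 1"
  shows "\<exists>xs. \<Union>C = set xs \<and> length xs = h \<and> distinct xs \<and> set xs \<subseteq> S"
proof -
  obtain xs where xs: "length xs = h" "distinct xs" "set xs \<subseteq> S"
     "C = {{xs ! i, xs ! ((i + 1) mod h)} | i. i < h}"
    using assms(1) unfolding hcycles_def by blast
  have "\<Union>C = set xs"
  proof
    show "\<Union>C \<subseteq> set xs" using xs assms(2) by (auto intro!: nth_mem mod_less_divisor)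
    show "set xs \<subseteq> \<Union>C"
    proof
      fix x assume "x \<in> set xs"
      then obtain i where "i < h" "x = xs ! i" using xs(1) by (auto simp: in_set_conv_nth)
      then show "x \<in> \<Union>C" using xs(4) by blast
    qed
  qed
  then show ?thesis using xs by blast
qed

lemma hcycles_mono: "S \<subseteq> V \<Longrightarrow> hcycles S E h \<subseteq> hcycles V E h"
  unfolding hcycles_def by blast

lemma sum_subsets_superset:
  fixes a :: "'a \<Rightarrow> real"
  assumes "finite V" "U \<subseteq> V"
  shows "(\<Sum>S\<in>Pow V. (\<Prod>u\<in>S. a u) * (\<Prod>u\<in>V-S. 1 - a u) * (if U \<subseteq> S then 1 else 0))
       = (\<Prod>u\<in>U. a u)"
proof -
  define g where "g u = (if u \<in> U then 0 else 1 - a u)" for u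
  have "(\<Prod>u\<in>V. a u + g u) = (\<Sum>S\<in>Pow V. (\<Prod>u\<in>S. a u) * (\<Prod>u\<in>V-S. g u))"
    by (rule prod_add[OF assms(1)])
  also have "\<dots> = (\<Sum>S\<in>Pow V. (\<Prod>u\<in>S. a u) * (\<Prod>u\<in>V-S. 1 - a u) * (if U \<subseteq> S then 1 else 0))"
  proof (rule sum.cong[OF refl])
    fix S assume S: "S \<in> Pow V"
    show "(\<Prod>u\<in>S. a u) * (\<Prod>u\<in>V-S. g u) = (\<Prod>u\<in>S. a u) * (\<Prod>u\<in>V-S. 1 - a u) * (if U \<subseteq> S then 1 else 0)"
    proof (cases "U \<subseteq> S")
      case True
      then have "(\<Prod>u\<in>V-S. g u) = (\<Prod>u\<in>V-S. 1 - a u)"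
        by (intro prod.cong) (auto simp: g_def)
      then show ?thesis using True by simp
    next
      case False
      then obtain u where "u \<in> U" "u \<notin> S" by blast
      then have "(\<Prod>u\<in>V-S. g u) = 0" using assms
        by (intro prod_zero) (auto simp: g_def)
      then show ?thesis using False by simp
    qed
  qed
  finally have 1: "(\<Prod>u\<in>V. a u + g u) = (\<Sum>S\<in>Pow V. (\<Prod>u\<in>S. a u) * (\<Prod>u\<in>V-S. 1 - a u) * (if U \<subseteq> S then 1 else 0))" .
  have "(\<Prod>u\<in>V. a u + g u) = (\<Prod>u\<in>V. if u \<in> U then a u else 1)"
    by (rule prod.cong) (auto simp: g_def)
  also have "\<dots> = (\<Prod>u\<in>U. a u)"
  proof -
    have "V \<inter> {x. x \<in> U} = U" using assms by auto
    then show ?thesis using assms by (simp add: prod.If_cases)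
  qed
  finally show ?thesis using 1 by simp
qed

lemma cycle_event:
  fixes p :: "nat \<Rightarrow> real"
  assumes "finite V" "U \<subseteq> V" "card U = h" "h \<ge> 1"
  shows "(\<Sum>\<phi>\<in>PiE V (\<lambda>_. {1..h}). \<Sum>S\<in>Pow V. (1 / real h ^ card V) * (\<Prod>u\<in>S. p (\<phi> u))
            * (\<Prod>u\<in>V - S. 1 - p (\<phi> u)) * (if U \<subseteq> S \<and> inj_on \<phi> U then 1 else 0))
       = (fact h / real h ^ h) * (\<Prod>i=1..h. p i)"
proof -
  define c where "c = 1 / real h ^ card V"
  define PP where "PP = (\<Prod>i=1..h. p i)"
  define A where "A = PiE V (\<lambda>_. {1..h::nat})"
  have fA: "finite A" unfolding A_def using assms(1) by (simp add: finite_PiE)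
  have step: "(\<Sum>S\<in>Pow V. c * (\<Prod>u\<in>S. p (\<phi> u))
            * (\<Prod>u\<in>V - S. 1 - p (\<phi> u)) * (if U \<subseteq> S \<and> inj_on \<phi> U then 1 else 0))
        = (if inj_on \<phi> U then c * PP else 0)" if "\<phi> \<in> A" for \<phi>
  proof (cases "inj_on \<phi> U")
    case True
    have im: "\<phi> ` U = {1..h}"
    proof (rule card_subset_eq)
      show "\<phi> ` U \<subseteq> {1..h}" using that assms(2) unfolding A_def by auto
      show "card (\<phi> ` U) = card {1..h}" using True assms(3) by (simp add: card_image)
    qed simp
    have pr: "(\<Prod>u\<in>U. p (\<phi> u)) = PP"
      unfolding PP_def using prod.reindex[OF True, of p] im by simp
    have "(\<Sum>S\<in>Pow V. c * (\<Prod>u\<in>S. p (\<phi> u))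
            * (\<Prod>u\<in>V - S. 1 - p (\<phi> u)) * (if U \<subseteq> S \<and> inj_on \<phi> U then 1 else 0))
       = c * (\<Sum>S\<in>Pow V. (\<Prod>u\<in>S. p (\<phi> u))
            * (\<Prod>u\<in>V - S. 1 - p (\<phi> u)) * (if U \<subseteq> S then 1 else 0))"
      using True by (simp add: sum_distrib_left mult.assoc)
    also have "\<dots> = c * PP"
      using sum_subsets_superset[OF assms(1,2), of "\<lambda>u. p (\<phi> u)"] pr by simp
    finally show ?thesis using True by simp
  qed simp
  have "(\<Sum>\<phi>\<in>A. \<Sum>S\<in>Pow V. c * (\<Prod>u\<in>S. p (\<phi> u))
            * (\<Prod>u\<in>V - S. 1 - p (\<phi> u)) * (if U \<subseteq> S \<and> inj_on \<phi> U then 1 else 0))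
      = (\<Sum>\<phi>\<in>A. if inj_on \<phi> U then c * PP else 0)"
    using step by (rule sum.cong[OF refl])
  also have "\<dots> = real (card {\<phi>\<in>A. inj_on \<phi> U}) * (c * PP)"
    using fA by (simp add: sum.inter_filter[symmetric])
  also have "card {\<phi>\<in>A. inj_on \<phi> U} = h ^ (card V - h) * fact h"
  proof -
    have "card {\<phi>\<in>A. inj_on \<phi> U} = card {1..h} ^ (card V - card U) * prod ((-) (card {1..h})) {0..<card U}"
      unfolding A_def by (rule card_inj_on_subset_funcset[OF assms(1) _ assms(2)]) simp
    then show ?thesis using assms(3) by (simp add: fact_prod_rev)
  qed
  also have "real (h ^ (card V - h) * fact h) * (c * PP) = (fact h / real h ^ h) * PP"
  proof -
    have hV: "h \<le> card V" using assms card_mono by metis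
    have "real h ^ card V = real h ^ (card V - h) * real h ^ h"
      using hV by (simp add: power_add[symmetric])
    moreover have "real h > 0" using assms by simp
    ultimately show ?thesis unfolding c_def by (simp add: field_simps)
  qed
  finally show ?thesis unfolding c_def PP_def A_def .
qed

theorem proposition3:
  fixes V :: "'a set" and E :: "'a \<Rightarrow> 'a \<Rightarrow> bool" and h :: nat
    and \<Lambda> Y :: real and v :: 'a and p :: "nat \<Rightarrow> real"
  assumes "simple_graph V E"
    and "h \<ge> 3"
    and "\<Lambda> > 0"
    and "Y > 0"
    and "v \<in> V"
    and "real (tG V E h v) \<le> \<Lambda> / Y"
    and "p \<in> Product h \<Lambda>"
  shows "discovery_prob V E h p v \<le> (fact h / real h ^ h) / Y"
proof -
  have fV: "finite V" using assms(1) unfolding simple_graph_def by blast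
  have h1: "h \<ge> 1" using assms(2) by simp
  have p01: "0 \<le> p i \<and> p i \<le> 1" if "i \<in> {1..h}" for i
  proof -
    have "\<forall>i\<in>{1..h}. \<exists>j::int. 0 \<le> j \<and> real_of_int j \<le> log 2 \<Lambda> + 1
        \<and> p i = 2 powr (- real_of_int j)" using assms(7) unfolding Product_def by blast
    then have "\<exists>j::int. 0 \<le> j \<and> real_of_int j \<le> log 2 \<Lambda> + 1
        \<and> p i = 2 powr (- real_of_int j)" using that by blast
    then obtain j :: int where j: "0 \<le> j" "p i = 2 powr (- real_of_int j)" by blast
    have g: "1 \<le> (2::real) powr (real_of_int j)"
      by (rule ge_one_powr_ge_zero) (use j in auto)
    have "p i = inverse ((2::real) powr (real_of_int j))" using j by (simp add: powr_minus)
    then show ?thesis using g by (simp add: inverse_le_1_iff)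
  qed
  have PPle: "(\<Prod>i=1..h. p i) \<le> 1 / \<Lambda>" using assms(7) unfolding Product_def by blast
  define q where "q = fact h / real h ^ h"
  have q0: "q \<ge> 0" unfolding q_def by simp
  define T where "T = {C \<in> hcycles V E h. v \<in> \<Union>C}"
  have UT: "\<Union>C \<subseteq> V \<and> card (\<Union>C) = h" if "C \<in> T" for C
  proof -
    have "C \<in> hcycles V E h" using that unfolding T_def by simp
    then obtain xs where "\<Union>C = set xs" "length xs = h" "distinct xs" "set xs \<subseteq> V"
      using cycle_verts[OF _ h1, of C V E] by blast
    then show ?thesis by (simp add: distinct_card)
  qed
  have fT: "finite T"
  proof (rule finite_subset)
    show "T \<subseteq> Pow (Pow V)"
    proof
      fix C assume "C \<in> T"
      then have "\<Union>C \<subseteq> V" using UT by simp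
      then show "C \<in> Pow (Pow V)" by auto
    qed
    show "finite (Pow (Pow V))" using fV by simp
  qed
  have cardT: "real (card T) \<le> \<Lambda> / Y" using assms(6) unfolding tG_def T_def by simp
  define A where "A = PiE V (\<lambda>_. {1..h::nat})"
  define w where "w \<phi> S = (1 / real h ^ card V) * (\<Prod>u\<in>S. p (\<phi> u)) * (\<Prod>u\<in>V - S. 1 - p (\<phi> u))"
    for \<phi> :: "'a \<Rightarrow> nat" and S
  define ind where "ind \<phi> S C = (if \<Union>C \<subseteq> S \<and> inj_on \<phi> (\<Union>C) then 1 else (0::real))"
    for \<phi> :: "'a \<Rightarrow> nat" and S and C :: "'a set set"
  have w0: "w \<phi> S \<ge> 0" if "\<phi> \<in> A" "S \<in> Pow V" for \<phi> S
  proof -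
    have "\<forall>u\<in>V. 0 \<le> p (\<phi> u) \<and> p (\<phi> u) \<le> 1"
    proof
      fix u assume "u \<in> V"
      then have "\<phi> u \<in> {1..h}" using that(1) unfolding A_def by (auto simp: PiE_mem)
      then show "0 \<le> p (\<phi> u) \<and> p (\<phi> u) \<le> 1" by (rule p01)
    qed
    then show ?thesis unfolding w_def using that
      by (intro mult_nonneg_nonneg prod_nonneg) auto
  qed
  have indb: "(if discovered E h \<phi> S v then 1 else 0) \<le> (\<Sum>C\<in>T. ind \<phi> S C)"
    if "S \<in> Pow V" for \<phi> S
  proof (cases "discovered E h \<phi> S v")
    case True
    then obtain C where C: "C \<in> hcycles S E h" "v \<in> \<Union>C" "inj_on \<phi> (\<Union>C)"
      unfolding discovered_def by blast
    have CT: "C \<in> T" using C hcycles_mono[of S V E h] that unfolding T_def by auto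
    have "\<Union>C \<subseteq> S" using cycle_verts[OF C(1) h1] by auto
    then have "ind \<phi> S C = 1" using C unfolding ind_def by simp
    moreover have "ind \<phi> S C \<le> (\<Sum>C\<in>T. ind \<phi> S C)"
      by (rule member_le_sum[OF CT _ fT]) (auto simp: ind_def)
    ultimately show ?thesis using True by simp
  next
    case False
    then show ?thesis by (auto intro!: sum_nonneg simp: ind_def)
  qed
  have "discovery_prob V E h p v = (\<Sum>\<phi>\<in>A. \<Sum>S\<in>Pow V. w \<phi> S * (if discovered E h \<phi> S v then 1 else 0))"
    unfolding discovery_prob_def A_def w_def by simp
  also have "\<dots> \<le> (\<Sum>\<phi>\<in>A. \<Sum>S\<in>Pow V. w \<phi> S * (\<Sum>C\<in>T. ind \<phi> S C))"
  proof (intro sum_mono mult_left_mono)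
    fix \<phi> S assume "\<phi> \<in> A" "S \<in> Pow V"
    then show "w \<phi> S \<ge> 0" "(if discovered E h \<phi> S v then 1 else 0) \<le> (\<Sum>C\<in>T. ind \<phi> S C)"
      using w0 indb by auto
  qed
  also have "\<dots> = (\<Sum>C\<in>T. \<Sum>\<phi>\<in>A. \<Sum>S\<in>Pow V. w \<phi> S * ind \<phi> S C)"
  proof -
    have "(\<Sum>\<phi>\<in>A. \<Sum>S\<in>Pow V. w \<phi> S * (\<Sum>C\<in>T. ind \<phi> S C))
        = (\<Sum>\<phi>\<in>A. \<Sum>S\<in>Pow V. \<Sum>C\<in>T. w \<phi> S * ind \<phi> S C)"
      by (simp only: sum_distrib_left)
    also have "\<dots> = (\<Sum>\<phi>\<in>A. \<Sum>C\<in>T. \<Sum>S\<in>Pow V. w \<phi> S * ind \<phi> S C)"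
      by (rule sum.cong[OF refl], rule sum.swap)
    also have "\<dots> = (\<Sum>C\<in>T. \<Sum>\<phi>\<in>A. \<Sum>S\<in>Pow V. w \<phi> S * ind \<phi> S C)"
      by (rule sum.swap)
    finally show ?thesis .
  qed
  also have "\<dots> = (\<Sum>C\<in>T. q * (\<Prod>i=1..h. p i))"
  proof (rule sum.cong[OF refl])
    fix C assume "C \<in> T"
    then show "(\<Sum>\<phi>\<in>A. \<Sum>S\<in>Pow V. w \<phi> S * ind \<phi> S C) = q * (\<Prod>i=1..h. p i)"
      using cycle_event[OF fV _ _ h1, of "\<Union>C" p] UT
      unfolding w_def ind_def q_def A_def by simp
  qed
  also have "\<dots> = real (card T) * q * (\<Prod>i=1..h. p i)" by simp
  also have "\<dots> \<le> real (card T) * q * (1 / \<Lambda>)"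
    using PPle q0 by (intro mult_left_mono) auto
  also have "\<dots> \<le> (\<Lambda> / Y) * q * (1 / \<Lambda>)"
    using cardT q0 assms(3) by (intro mult_right_mono) auto
  also have "\<dots> = q / Y" using assms(3) by simp
  finally show ?thesis unfolding q_def .
qed

end
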